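(* Let $(\mathcal{C},f,m)$ be a Floer triple over a field $\mathbb{F}$. Then both chain complexes $\varinjlim_{b\to\infty}\varprojlim_{a\to-\infty}CM_a^b$ and $\varprojlim_{a\to-\infty}\varinjlim_{b\to\infty}CM_a^b$ are naturally isomorphic to the Novikov complex $(\Lambda,\partial)$, the canonical chain map $k$ between them is an isomorphism (hence so is $Hk$), and $H(\varinjlim_b\varprojlim_a CM)\cong H(\varprojlim_a\varinjlim_b CM)\cong HM$.
   Context: A Floer triple $(\mathcal{C},f,m)$ over a field $\mathbb{F}$: a set $\mathcal{C}$, $f\colon\mathcal{C}\to\mathbb{R}$, $m\colon\mathcal{C}\times\mathcal{C}\to\mathbb{F}$ with (i) $\mathcal{C}_a^b=\{c: a\le f(c)\le b\}$ finite for all $a\le b$; (ii) $m(c_1,c_2)\ne0\Rightarrow f(c_1)<f(c_2)$; (iii) $\sum_{c_2}m(c_1,c_2)m(c_2,c_3)=0$ for all $c_1,c_3$. $CM_a^b$ is the $\mathbb{F}$-vector space with basis $\mathcal{C}_a^b$ (zero if $a>b$), $\partial_a^b c=\sum_{c'\in\mathcal{C}_a^b}m(c',c)c'$. For $a_1\le a_2$, $p^b_{a_2,a_1}\colon CM^b_{a_1}\to CM^b_{a_2}$ sends $c\mapsto c$ if $f(c)\ge a_2$, else $0$; for $b_1\le b_2$, $i_a^{b_2,b_1}$ is the inclusion. The inverse limit over $a$ is taken with respect to the $p$'s (compatible families), the direct limit over $b$ with respect to the $i$'s. The canonical map $k\colon\varinjlim_b\varprojlim_a CM\to\varprojlim_a\varinjlim_b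 CM$ sends the class of $(x_a)_a\in\varprojlim_a CM_a^b$ to $(i_a^b x_a)_a$, with $i_a^b\colon CM_a^b\to\varinjlim_{b'}CM_a^{b'}$ canonical. The Novikov complex $\Lambda$ consists of formal sums $\sum_{c\in\mathcal{C}}\gamma_c c$, $\gamma_c\in\mathbb{F}$, with $\{c:\gamma_c\neq0, f(c)>b\}$ finite for all $b$, and $\partial\sum\gamma_cc=\sum_c\gamma_c\sum_{c'}m(c',c)c'$; $HM=H(\Lambda,\partial)$. *)

theory Defs
  imports Complex_Main
begin

record ('v, 'k) cx =
  car :: "'v set"
  zr  :: 'v
  ad  :: "'v \<Rightarrow> 'v \<Rightarrow> 'v"
  sm  :: "'k \<Rightarrow> 'v \<Rightarrow> 'v"
  dd  :: "'v \<Rightarrow> 'v"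

definition lin_iso :: "('v,'k) cx \<Rightarrow> ('w,'k) cx \<Rightarrow> ('v \<Rightarrow> 'w) \<Rightarrow> bool" where
  "lin_iso V W \<phi> \<longleftrightarrow> bij_betw \<phi> (car V) (car W)
     \<and> (\<forall>x\<in>car V. \<forall>y\<in>car V. \<phi> (ad V x y) = ad W (\<phi> x) (\<phi> y))
     \<and> (\<forall>s. \<forall>x\<in>car V. \<phi> (sm V s x) = sm W s (\<phi> x))"

definition chain_iso :: "('v,'k) cx \<Rightarrow> ('w,'k) cx \<Rightarrow> ('v \<Rightarrow> 'w) \<Rightarrow> bool" where
  "chain_iso V W \<phi> \<longleftrightarrow> lin_iso V W \<phi> \<and> (\<forall>x\<in>car V. \<phi> (dd V x) = dd W (\<phi> x))"

definition cycles :: "('v,'k) cx \<Rightarrow> 'v set" where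
  "cycles V = {z \<in> car V. dd V z = zr V}"

definition hcls :: "('v,'k) cx \<Rightarrow> 'v \<Rightarrow> 'v set" where
  "hcls V z = {ad V z y | y. y \<in> dd V ` car V}"

definition hom :: "('v,'k) cx \<Rightarrow> ('v set,'k) cx" where
  "hom V = \<lparr> car = {hcls V z | z. z \<in> cycles V},
             zr = hcls V (zr V),
             ad = (\<lambda>Z1 Z2. hcls V (ad V (SOME z. z \<in> Z1) (SOME z. z \<in> Z2))),
             sm = (\<lambda>s Z. hcls V (sm V s (SOME z. z \<in> Z))),
             dd = (\<lambda>Z. hcls V (zr V)) \<rparr>"

definition hmap :: "('v,'k) cx \<Rightarrow> ('w,'k) cx \<Rightarrow> ('v \<Rightarrow> 'w) \<Rightarrow> 'v set \<Rightarrow> 'w set" where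
  "hmap V W \<phi> Z = hcls W (\<phi> (SOME z. z \<in> Z))"

subsection \<open>Direct limits over b \<in> real (maps i b2 b1 for b1 \<le> b2)\<close>

definition dl_rel :: "(real \<Rightarrow> ('v,'k) cx) \<Rightarrow> (real \<Rightarrow> real \<Rightarrow> 'v \<Rightarrow> 'v)
     \<Rightarrow> real \<times> 'v \<Rightarrow> real \<times> 'v \<Rightarrow> bool" where
  "dl_rel V i p q \<longleftrightarrow> snd p \<in> car (V (fst p)) \<and> snd q \<in> car (V (fst q))
     \<and> (\<exists>b. fst p \<le> b \<and> fst q \<le> b \<and> i b (fst p) (snd p) = i b (fst q) (snd q))"

definition dl_cls :: "(real \<Rightarrow> ('v,'k) cx) \<Rightarrow> (real \<Rightarrow> real \<Rightarrow> 'v \<Rightarrow> 'v)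
     \<Rightarrow> real \<Rightarrow> 'v \<Rightarrow> (real \<times> 'v) set" where
  "dl_cls V i b x = {q. dl_rel V i (b, x) q}"

definition dl_rep :: "(real \<times> 'v) set \<Rightarrow> real \<times> 'v" where
  "dl_rep X = (SOME p. p \<in> X)"

definition dirlim :: "(real \<Rightarrow> ('v,'k) cx) \<Rightarrow> (real \<Rightarrow> real \<Rightarrow> 'v \<Rightarrow> 'v)
     \<Rightarrow> ((real \<times> 'v) set, 'k) cx" where
  "dirlim V i = \<lparr> car = {dl_cls V i b x | b x. x \<in> car (V b)},
     zr = dl_cls V i 0 (zr (V 0)),
     ad = (\<lambda>X Y. let b1 = fst (dl_rep X); x1 = snd (dl_rep X);
                     b2 = fst (dl_rep Y); x2 = snd (dl_rep Y); b = max b1 b2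
                 in dl_cls V i b (ad (V b) (i b b1 x1) (i b b2 x2))),
     sm = (\<lambda>s X. dl_cls V i (fst (dl_rep X)) (sm (V (fst (dl_rep X))) s (snd (dl_rep X)))),
     dd = (\<lambda>X. dl_cls V i (fst (dl_rep X)) (dd (V (fst (dl_rep X))) (snd (dl_rep X)))) \<rparr>"

definition dl_map :: "(real \<Rightarrow> ('w,'k) cx) \<Rightarrow> (real \<Rightarrow> real \<Rightarrow> 'w \<Rightarrow> 'w)
     \<Rightarrow> (real \<Rightarrow> 'v \<Rightarrow> 'w) \<Rightarrow> (real \<times> 'v) set \<Rightarrow> (real \<times> 'w) set" where
  "dl_map V' i' g X = dl_cls V' i' (fst (dl_rep X)) (g (fst (dl_rep X)) (snd (dl_rep X)))"

subsection \<open>Inverse limits over a \<in> real (maps p a2 a1 for a1 \<le> a2): compatible families\<close>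

definition invlim :: "(real \<Rightarrow> ('v,'k) cx) \<Rightarrow> (real \<Rightarrow> real \<Rightarrow> 'v \<Rightarrow> 'v)
     \<Rightarrow> (real \<Rightarrow> 'v, 'k) cx" where
  "invlim W p = \<lparr> car = {x. (\<forall>a. x a \<in> car (W a)) \<and> (\<forall>a1 a2. a1 \<le> a2 \<longrightarrow> p a2 a1 (x a1) = x a2)},
     zr = (\<lambda>a. zr (W a)),
     ad = (\<lambda>x y a. ad (W a) (x a) (y a)),
     sm = (\<lambda>s x a. sm (W a) s (x a)),
     dd = (\<lambda>x a. dd (W a) (x a)) \<rparr>"

definition floer_triple :: "'c set \<Rightarrow> ('c \<Rightarrow> real) \<Rightarrow> ('c \<Rightarrow> 'c \<Rightarrow> 'k::field) \<Rightarrow> bool" where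
  "floer_triple C f m \<longleftrightarrow>
     (\<forall>a b. a \<le> b \<longrightarrow> finite {c \<in> C. a \<le> f c \<and> f c \<le> b})
   \<and> (\<forall>c1\<in>C. \<forall>c2\<in>C. m c1 c2 \<noteq> 0 \<longrightarrow> f c1 < f c2)
   \<and> (\<forall>c1\<in>C. \<forall>c3\<in>C. (\<Sum>c2 \<in> {c2 \<in> C. m c1 c2 * m c2 c3 \<noteq> 0}. m c1 c2 * m c2 c3) = 0)"

text \<open>C_a^b, and CM_a^b as finitely supported coefficient functions on C_a^b.\<close>
definition Cab :: "'c set \<Rightarrow> ('c \<Rightarrow> real) \<Rightarrow> real \<Rightarrow> real \<Rightarrow> 'c set" where
  "Cab C f a b = {c \<in> C. a \<le> f c \<and> f c \<le> b}"

definition CM :: "'c set \<Rightarrow> ('c \<Rightarrow> real) \<Rightarrow> ('c \<Rightarrow> 'c \<Rightarrow> 'k::field) \<Rightarrow> real \<Rightarrow> real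
     \<Rightarrow> ('c \<Rightarrow> 'k, 'k) cx" where
  "CM C f m a b = \<lparr> car = {x. \<forall>c. x c \<noteq> 0 \<longrightarrow> c \<in> Cab C f a b},
     zr = (\<lambda>c. 0),
     ad = (\<lambda>x y c. x c + y c),
     sm = (\<lambda>s x c. s * x c),
     dd = (\<lambda>x c'. if c' \<in> Cab C f a b then (\<Sum>c \<in> Cab C f a b. m c' c * x c) else 0) \<rparr>"

text \<open>p^b_{a2,a1}: keep c iff f c \<ge> a2.  i_a^{b2,b1}: inclusion.\<close>
definition projp :: "('c \<Rightarrow> real) \<Rightarrow> real \<Rightarrow> real \<Rightarrow> ('c \<Rightarrow> 'k::zero) \<Rightarrow> 'c \<Rightarrow> 'k" where
  "projp f a2 a1 x = (\<lambda>c. if a2 \<le> f c then x c else 0)"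

definition incl :: "real \<Rightarrow> real \<Rightarrow> 'v \<Rightarrow> 'v" where
  "incl b2 b1 x = x"

definition DI :: "'c set \<Rightarrow> ('c \<Rightarrow> real) \<Rightarrow> ('c \<Rightarrow> 'c \<Rightarrow> 'k::field)
     \<Rightarrow> ((real \<times> (real \<Rightarrow> 'c \<Rightarrow> 'k)) set, 'k) cx" where
  "DI C f m = dirlim (\<lambda>b. invlim (\<lambda>a. CM C f m a b) (projp f))
                     (\<lambda>b2 b1 x a. incl b2 b1 (x a))"

definition ID :: "'c set \<Rightarrow> ('c \<Rightarrow> real) \<Rightarrow> ('c \<Rightarrow> 'c \<Rightarrow> 'k::field)
     \<Rightarrow> (real \<Rightarrow> (real \<times> ('c \<Rightarrow> 'k)) set, 'k) cx" where
  "ID C f m = invlim (\<lambda>a. dirlim (\<lambda>b. CM C f m a b) incl)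
                     (\<lambda>a2 a1. dl_map (\<lambda>b. CM C f m a2 b) incl (\<lambda>b. projp f a2 a1))"

definition kmap :: "'c set \<Rightarrow> ('c \<Rightarrow> real) \<Rightarrow> ('c \<Rightarrow> 'c \<Rightarrow> 'k::field)
     \<Rightarrow> (real \<times> (real \<Rightarrow> 'c \<Rightarrow> 'k)) set \<Rightarrow> real \<Rightarrow> (real \<times> ('c \<Rightarrow> 'k)) set" where
  "kmap C f m X = (\<lambda>a. dl_cls (\<lambda>b. CM C f m a b) incl (fst (dl_rep X)) (snd (dl_rep X) a))"

definition Nov :: "'c set \<Rightarrow> ('c \<Rightarrow> real) \<Rightarrow> ('c \<Rightarrow> 'c \<Rightarrow> 'k::field) \<Rightarrow> ('c \<Rightarrow> 'k, 'k) cx" where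
  "Nov C f m = \<lparr> car = {\<gamma>. (\<forall>c. \<gamma> c \<noteq> 0 \<longrightarrow> c \<in> C) \<and> (\<forall>b. finite {c. \<gamma> c \<noteq> 0 \<and> b < f c})},
     zr = (\<lambda>c. 0),
     ad = (\<lambda>x y c. x c + y c),
     sm = (\<lambda>s x c. s * x c),
     dd = (\<lambda>\<gamma> c'. if c' \<in> C then (\<Sum>c \<in> {c \<in> C. \<gamma> c \<noteq> 0 \<and> m c' c \<noteq> 0}. m c' c * \<gamma> c) else 0) \<rparr>"

definition nov_ID :: "('c \<Rightarrow> real) \<Rightarrow> (real \<Rightarrow> (real \<times> ('c \<Rightarrow> 'k)) set) \<Rightarrow> 'c \<Rightarrow> 'k" where
  "nov_ID f y = (\<lambda>c. snd (dl_rep (y (f c))) c)"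

definition nov_DI :: "('c \<Rightarrow> real) \<Rightarrow> (real \<times> (real \<Rightarrow> 'c \<Rightarrow> 'k)) set \<Rightarrow> 'c \<Rightarrow> 'k" where
  "nov_DI f X = (\<lambda>c. snd (dl_rep X) (f c) c)"

end

theory Submission
  imports Defs
begin

locale gcx =
  fixes V :: "('v,'k) cx"
  assumes zr_car: "zr V \<in> car V"
  and ad_car: "\<lbrakk>x \<in> car V; y \<in> car V\<rbrakk> \<Longrightarrow> ad V x y \<in> car V"
  and sm_car: "x \<in> car V \<Longrightarrow> sm V s x \<in> car V"
  and dd_car: "x \<in> car V \<Longrightarrow> dd V x \<in> car V"
  and ad_assoc: "\<lbrakk>x\<in>car V; y\<in>car V; z\<in>car V\<rbrakk> \<Longrightarrow> ad V (ad V x y) z = ad V x (ad V y z)"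
  and ad_comm: "\<lbrakk>x\<in>car V; y\<in>car V\<rbrakk> \<Longrightarrow> ad V x y = ad V y x"
  and ad_zr: "x \<in> car V \<Longrightarrow> ad V (zr V) x = x"
  and ad_inv: "x \<in> car V \<Longrightarrow> \<exists>y\<in>car V. ad V x y = zr V"
  and dd_ad: "\<lbrakk>x\<in>car V; y\<in>car V\<rbrakk> \<Longrightarrow> dd V (ad V x y) = ad V (dd V x) (dd V y)"
  and sm_ad: "\<lbrakk>x\<in>car V; y\<in>car V\<rbrakk> \<Longrightarrow> sm V s (ad V x y) = ad V (sm V s x) (sm V s y)"
  and dd_sm: "x\<in>car V \<Longrightarrow> dd V (sm V s x) = sm V s (dd V x)"
begin

lemma ad_zr_r: "x\<in>car V \<Longrightarrow> ad V x (zr V) = x"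
  using ad_comm[of x "zr V"] ad_zr[of x] zr_car by simp

lemma ad_lcomm: "\<lbrakk>x\<in>car V; y\<in>car V; z\<in>car V\<rbrakk> \<Longrightarrow> ad V x (ad V y z) = ad V y (ad V x z)"
proof -
  assume a: "x\<in>car V" "y\<in>car V" "z\<in>car V"
  have "ad V x (ad V y z) = ad V (ad V x y) z" using a ad_assoc by simp
  also have "\<dots> = ad V (ad V y x) z" using a ad_comm[of x y] by simp
  also have "\<dots> = ad V y (ad V x z)" using a ad_assoc by simp
  finally show ?thesis .
qed

lemma cancel:
  assumes "a\<in>car V" "b\<in>car V" "c\<in>car V" "ad V a b = ad V a c" shows "b = c"
proof -
  obtain a' where a': "a'\<in>car V" "ad V a a' = zr V" using ad_inv assms(1) by blast
  have "b = ad V (ad V a' a) b" using a' assms ad_comm[of a' a] ad_zr by simp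
  also have "\<dots> = ad V a' (ad V a b)" using a' assms ad_assoc by simp
  also have "\<dots> = ad V a' (ad V a c)" using assms by simp
  also have "\<dots> = ad V (ad V a' a) c" using a' assms ad_assoc by simp
  also have "\<dots> = c" using a' assms ad_comm[of a' a] ad_zr by simp
  finally show ?thesis .
qed

lemma dd_zr: "dd V (zr V) = zr V"
proof -
  have "ad V (dd V (zr V)) (zr V) = ad V (dd V (zr V)) (dd V (zr V))"
    using ad_zr_r[OF dd_car[OF zr_car]] dd_ad[OF zr_car zr_car] ad_zr[OF zr_car] by simp
  then have "zr V = dd V (zr V)" by (rule cancel[OF dd_car[OF zr_car] zr_car dd_car[OF zr_car]])
  then show ?thesis by simp
qed

lemma sm_zr: "sm V s (zr V) = zr V"
proof -
  have "ad V (sm V s (zr V)) (zr V) = ad V (sm V s (zr V)) (sm V s (zr V))"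
    using ad_zr_r[OF sm_car[OF zr_car]] sm_ad[OF zr_car zr_car] ad_zr[OF zr_car] by simp
  then have "zr V = sm V s (zr V)" by (rule cancel[OF sm_car[OF zr_car] zr_car sm_car[OF zr_car]])
  then show ?thesis by simp
qed

lemma hcls_self: "z\<in>car V \<Longrightarrow> z \<in> hcls V z"
proof -
  assume z: "z\<in>car V"
  have "z = ad V z (dd V (zr V))" using dd_zr ad_zr_r z by simp
  then show ?thesis unfolding hcls_def using zr_car by blast
qed

lemma hcls_shift:
  assumes z: "z\<in>car V" and u: "u\<in>car V"
  shows "hcls V (ad V z (dd V u)) = hcls V z"
proof
  show "hcls V (ad V z (dd V u)) \<subseteq> hcls V z"
  proof
    fix w assume "w \<in> hcls V (ad V z (dd V u))"
    then obtain y where y: "y\<in>car V" "w = ad V (ad V z (dd V u)) (dd V y)"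
      unfolding hcls_def by auto
    then have "w = ad V z (dd V (ad V u y))"
      using z u ad_assoc dd_car dd_ad by simp
    then show "w \<in> hcls V z" unfolding hcls_def using u y ad_car by blast
  qed
next
  show "hcls V z \<subseteq> hcls V (ad V z (dd V u))"
  proof
    fix w assume "w \<in> hcls V z"
    then obtain y where y: "y\<in>car V" "w = ad V z (dd V y)"
      unfolding hcls_def by auto
    obtain u' where u': "u'\<in>car V" "ad V u u' = zr V" using ad_inv u by blast
    have "ad V (dd V u) (ad V (dd V y) (dd V u')) = ad V (dd V y) (ad V (dd V u) (dd V u'))"
      using u u' y dd_car ad_lcomm by blast
    also have "\<dots> = ad V (dd V y) (dd V (ad V u u'))" using u u' dd_ad[of u u'] by simp
    also have "\<dots> = dd V y" using u' dd_zr ad_zr_r dd_car y by simp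
    finally have e: "ad V (dd V u) (ad V (dd V y) (dd V u')) = dd V y" .
    have "ad V (ad V z (dd V u)) (dd V (ad V y u')) = ad V z (ad V (dd V u) (dd V (ad V y u')))"
      using y u u' z ad_assoc dd_car ad_car by simp
    also have "\<dots> = ad V z (ad V (dd V u) (ad V (dd V y) (dd V u')))"
      using y u' dd_ad[of y u'] by simp
    finally have "ad V (ad V z (dd V u)) (dd V (ad V y u')) = ad V z (ad V (dd V u) (ad V (dd V y) (dd V u')))" .
    then have "w = ad V (ad V z (dd V u)) (dd V (ad V y u'))"
      using e y by simp
    then show "w \<in> hcls V (ad V z (dd V u))" unfolding hcls_def using u' y ad_car by blast
  qed
qed

lemma hcls_eq:
  assumes "z1\<in>car V" "hcls V z1 = hcls V z2"
  shows "\<exists>u\<in>car V. z1 = ad V z2 (dd V u)"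
  using hcls_self[OF assms(1)] assms(2) unfolding hcls_def by auto

lemma rep_hcls:
  assumes "z\<in>car V" shows "\<exists>u\<in>car V. (SOME w. w \<in> hcls V z) = ad V z (dd V u)"
proof -
  have "(SOME w. w \<in> hcls V z) \<in> hcls V z" using hcls_self[OF assms] by (rule someI)
  then show ?thesis unfolding hcls_def by auto
qed

lemma hom_ad:
  assumes z1: "z1\<in>car V" and z2: "z2\<in>car V"
  shows "ad (hom V) (hcls V z1) (hcls V z2) = hcls V (ad V z1 z2)"
proof -
  obtain u1 where u1: "u1\<in>car V" "(SOME w. w \<in> hcls V z1) = ad V z1 (dd V u1)" using rep_hcls z1 by blast
  obtain u2 where u2: "u2\<in>car V" "(SOME w. w \<in> hcls V z2) = ad V z2 (dd V u2)" using rep_hcls z2 by blast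
  have d1: "dd V u1 \<in> car V" "dd V u2 \<in> car V" using u1 u2 dd_car by auto
  have "ad V (ad V z1 (dd V u1)) (ad V z2 (dd V u2)) = ad V z1 (ad V (dd V u1) (ad V z2 (dd V u2)))"
    using z1 z2 d1 ad_car ad_assoc by simp
  also have "\<dots> = ad V z1 (ad V z2 (ad V (dd V u1) (dd V u2)))"
    using z1 z2 d1 ad_lcomm[of "dd V u1" z2 "dd V u2"] by simp
  also have "\<dots> = ad V (ad V z1 z2) (ad V (dd V u1) (dd V u2))"
    using z1 z2 d1 ad_car ad_assoc by simp
  also have "\<dots> = ad V (ad V z1 z2) (dd V (ad V u1 u2))"
    using u1 u2 dd_ad[of u1 u2] by simp
  finally have "ad V (ad V z1 (dd V u1)) (ad V z2 (dd V u2)) = ad V (ad V z1 z2) (dd V (ad V u1 u2))" .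
  then show ?thesis using u1 u2 hcls_shift z1 z2 ad_car by (simp add: hom_def)
qed

lemma hom_sm:
  assumes z: "z\<in>car V"
  shows "sm (hom V) s (hcls V z) = hcls V (sm V s z)"
proof -
  obtain u where u: "u\<in>car V" "(SOME w. w \<in> hcls V z) = ad V z (dd V u)" using rep_hcls z by blast
  have "sm V s (ad V z (dd V u)) = ad V (sm V s z) (dd V (sm V s u))"
    using z u dd_car sm_ad dd_sm by simp
  then show ?thesis using u hcls_shift z sm_car by (simp add: hom_def)
qed

end

lemma hom_iso:
  assumes V: "gcx V" and W: "gcx W" and iso: "chain_iso V W \<phi>"
  shows "lin_iso (hom V) (hom W) (hmap V W \<phi>)"
proof -
  interpret V: gcx V by (rule V)
  interpret W: gcx W by (rule W)
  from iso have bij: "bij_betw \<phi> (car V) (car W)"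
    and add: "\<And>x y. x\<in>car V \<Longrightarrow> y\<in>car V \<Longrightarrow> \<phi> (ad V x y) = ad W (\<phi> x) (\<phi> y)"
    and smul: "\<And>s x. x\<in>car V \<Longrightarrow> \<phi> (sm V s x) = sm W s (\<phi> x)"
    and dd: "\<And>x. x\<in>car V \<Longrightarrow> \<phi> (dd V x) = dd W (\<phi> x)"
    by (auto simp: chain_iso_def lin_iso_def)
  have inj: "inj_on \<phi> (car V)" and img: "\<phi> ` car V = car W" using bij unfolding bij_betw_def by auto
  have pc: "\<And>x. x\<in>car V \<Longrightarrow> \<phi> x \<in> car W" using img by auto
  have phi0: "\<phi> (zr V) = zr W"
  proof -
    have "ad W (\<phi> (zr V)) (\<phi> (zr V)) = ad W (\<phi> (zr V)) (zr W)"
      using add[OF V.zr_car V.zr_car] V.ad_zr[OF V.zr_car] W.ad_zr_r pc V.zr_car by simp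
    then show ?thesis using W.cancel pc V.zr_car W.zr_car by metis
  qed
  have M: "\<And>z. z\<in>car V \<Longrightarrow> hmap V W \<phi> (hcls V z) = hcls W (\<phi> z)"
  proof -
    fix z assume z: "z\<in>car V"
    obtain u where u: "u\<in>car V" "(SOME w. w \<in> hcls V z) = ad V z (dd V u)" using V.rep_hcls z by blast
    have "\<phi> (ad V z (dd V u)) = ad W (\<phi> z) (dd W (\<phi> u))" using add dd z u V.dd_car by simp
    then show "hmap V W \<phi> (hcls V z) = hcls W (\<phi> z)"
      unfolding hmap_def using u W.hcls_shift pc z by simp
  qed
  have cyc: "\<And>z. z \<in> cycles V \<Longrightarrow> \<phi> z \<in> cycles W"
  proof -
    fix z assume "z \<in> cycles V"
    then have z: "z \<in> car V" "dd V z = zr V" by (auto simp: cycles_def)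
    have "dd W (\<phi> z) = zr W" using dd[OF z(1)] z(2) phi0 by simp
    then show "\<phi> z \<in> cycles W" using pc z by (simp add: cycles_def)
  qed
  have cycb: "\<And>z. z \<in> car V \<Longrightarrow> \<phi> z \<in> cycles W \<Longrightarrow> z \<in> cycles V"
  proof -
    fix z assume z: "z \<in> car V" "\<phi> z \<in> cycles W"
    then have "\<phi> (dd V z) = \<phi> (zr V)" using dd phi0 by (simp add: cycles_def)
    then have "dd V z = zr V" using inj V.dd_car V.zr_car z(1) by (simp add: inj_on_def)
    then show "z \<in> cycles V" using z by (simp add: cycles_def)
  qed
  have cycc: "\<And>z. z \<in> cycles V \<Longrightarrow> z \<in> car V" by (simp add: cycles_def)
  have cyccW: "\<And>z. z \<in> cycles W \<Longrightarrow> z \<in> car W" by (simp add: cycles_def)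
  have carV: "car (hom V) = {hcls V z | z. z \<in> cycles V}" by (simp add: hom_def)
  have carW: "car (hom W) = {hcls W z | z. z \<in> cycles W}" by (simp add: hom_def)
  have injh: "inj_on (hmap V W \<phi>) (car (hom V))"
  proof (rule inj_onI)
    fix Z1 Z2 assume "Z1 \<in> car (hom V)" "Z2 \<in> car (hom V)" and e: "hmap V W \<phi> Z1 = hmap V W \<phi> Z2"
    then obtain z1 z2 where z: "z1 \<in> cycles V" "z2 \<in> cycles V" "Z1 = hcls V z1" "Z2 = hcls V z2"
      using carV by auto
    then have "hcls W (\<phi> z1) = hcls W (\<phi> z2)" using e M cycc by simp
    then have "\<exists>w\<in>car W. \<phi> z1 = ad W (\<phi> z2) (dd W w)"
      using W.hcls_eq[OF pc[OF cycc[OF z(1)]]] by blast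
    then obtain w where w: "w\<in>car W" "\<phi> z1 = ad W (\<phi> z2) (dd W w)" by blast
    obtain u where u: "u \<in> car V" "w = \<phi> u" using w img by auto
    have "\<phi> z1 = \<phi> (ad V z2 (dd V u))" using w u add dd z cycc V.dd_car by simp
    then have "z1 = ad V z2 (dd V u)" using inj z cycc V.ad_car V.dd_car u by (simp add: inj_on_def)
    then show "Z1 = Z2" using z V.hcls_shift cycc u by simp
  qed
  have imgh: "hmap V W \<phi> ` car (hom V) = car (hom W)"
  proof
    show "hmap V W \<phi> ` car (hom V) \<subseteq> car (hom W)"
      using carV carW M cyc cycc by auto
  next
    show "car (hom W) \<subseteq> hmap V W \<phi> ` car (hom V)"
    proof
      fix Z assume "Z \<in> car (hom W)"
      then obtain w where w: "w \<in> cycles W" "Z = hcls W w" using carW by auto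
      have "w \<in> \<phi> ` car V" using w(1) cyccW img by simp
      then obtain z where z: "z\<in>car V" "w = \<phi> z" by auto
      have zc: "z \<in> cycles V" using cycb z w by simp
      have "Z = hmap V W \<phi> (hcls V z)" using M z w by simp
      moreover have "hcls V z \<in> car (hom V)" using carV zc by auto
      ultimately show "Z \<in> hmap V W \<phi> ` car (hom V)" by blast
    qed
  qed
  have cyc_ad: "\<And>x y. x \<in> cycles V \<Longrightarrow> y \<in> cycles V \<Longrightarrow> ad V x y \<in> cycles V"
    using V.ad_car V.dd_ad V.ad_zr V.zr_car by (simp add: cycles_def)
  have cyc_sm: "\<And>s x. x \<in> cycles V \<Longrightarrow> sm V s x \<in> cycles V"
    using V.sm_car V.dd_sm V.sm_zr by (simp add: cycles_def)
  have hadd: "\<forall>X\<in>car (hom V). \<forall>Y\<in>car (hom V).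
      hmap V W \<phi> (ad (hom V) X Y) = ad (hom W) (hmap V W \<phi> X) (hmap V W \<phi> Y)"
  proof (intro ballI)
    fix X Y assume "X\<in>car (hom V)" "Y\<in>car (hom V)"
    then obtain x y where xy: "x \<in> cycles V" "y \<in> cycles V" "X = hcls V x" "Y = hcls V y"
      using carV by auto
    show "hmap V W \<phi> (ad (hom V) X Y) = ad (hom W) (hmap V W \<phi> X) (hmap V W \<phi> Y)"
      using xy V.hom_ad W.hom_ad M cycc add V.ad_car pc by simp
  qed
  have hsm: "\<forall>s. \<forall>X\<in>car (hom V). hmap V W \<phi> (sm (hom V) s X) = sm (hom W) s (hmap V W \<phi> X)"
  proof (intro allI ballI)
    fix s X assume "X\<in>car (hom V)"
    then obtain x where xy: "x \<in> cycles V" "X = hcls V x" using carV by auto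
    show "hmap V W \<phi> (sm (hom V) s X) = sm (hom W) s (hmap V W \<phi> X)"
      using xy V.hom_sm W.hom_sm M cycc smul V.sm_car pc by simp
  qed
  have b: "bij_betw (hmap V W \<phi>) (car (hom V)) (car (hom W))"
    unfolding bij_betw_def by (rule conjI[OF injh imgh])
  show ?thesis unfolding lin_iso_def by (rule conjI[OF b conjI[OF hadd hsm]])
qed

lemma rep_gcx:
  assumes N: "gcx N" and cV: "car V = R ` car N"
  and a: "\<And>x y. x\<in>car N \<Longrightarrow> y\<in>car N \<Longrightarrow> ad V (R x) (R y) = R (ad N x y)"
  and s: "\<And>s x. x\<in>car N \<Longrightarrow> sm V s (R x) = R (sm N s x)"
  and d: "\<And>x. x\<in>car N \<Longrightarrow> dd V (R x) = R (dd N x)"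
  and z: "zr V = R (zr N)"
  shows "gcx V"
proof -
  interpret N: gcx N by (rule N)
  show ?thesis
  proof (unfold_locales, unfold cV)
    show "zr V \<in> R ` car N" using z N.zr_car by simp
  next
    fix x y assume "x \<in> R ` car N" "y \<in> R ` car N" then show "ad V x y \<in> R ` car N"
      using a N.ad_car by auto
  next
    fix s x assume "x \<in> R ` car N" then show "sm V s x \<in> R ` car N"
      using s N.sm_car by auto
  next
    fix x assume "x \<in> R ` car N" then show "dd V x \<in> R ` car N"
      using d N.dd_car by auto
  next
    fix x y w assume "x \<in> R ` car N" "y \<in> R ` car N" "w \<in> R ` car N"
    then show "ad V (ad V x y) w = ad V x (ad V y w)"
      using a N.ad_car N.ad_assoc by auto
  next
    fix x y assume "x \<in> R ` car N" "y \<in> R ` car N" then show "ad V x y = ad V y x"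
      using a N.ad_comm by auto
  next
    fix x assume "x \<in> R ` car N" then show "ad V (zr V) x = x"
      using a N.ad_zr z N.zr_car by auto
  next
    fix x assume "x \<in> R ` car N"
    then obtain x' where x': "x'\<in>car N" "x = R x'" by auto
    obtain y where y: "y\<in>car N" "ad N x' y = zr N" using N.ad_inv x' by blast
    have "ad V x (R y) = zr V" using x' y a z by simp
    then show "\<exists>y\<in>R ` car N. ad V x y = zr V" using y by blast
  next
    fix x y assume "x \<in> R ` car N" "y \<in> R ` car N"
    then show "dd V (ad V x y) = ad V (dd V x) (dd V y)"
      using a d N.ad_car N.dd_car N.dd_ad by auto
  next
    fix s x y assume "x \<in> R ` car N" "y \<in> R ` car N"
    then show "sm V s (ad V x y) = ad V (sm V s x) (sm V s y)"
      using a s N.ad_car N.sm_car N.sm_ad by auto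
  next
    fix s x assume "x \<in> R ` car N"
    then show "dd V (sm V s x) = sm V s (dd V x)"
      using s d N.sm_car N.dd_car N.dd_sm by auto
  qed
qed

lemma rep_iso:
  assumes N: "gcx N" and c1: "car V1 = R1 ` car N" and c2: "car V2 = R2 ` car N"
  and inj2: "inj_on R2 (car N)"
  and a1: "\<And>x y. x\<in>car N \<Longrightarrow> y\<in>car N \<Longrightarrow> ad V1 (R1 x) (R1 y) = R1 (ad N x y)"
  and s1: "\<And>s x. x\<in>car N \<Longrightarrow> sm V1 s (R1 x) = R1 (sm N s x)"
  and d1: "\<And>x. x\<in>car N \<Longrightarrow> dd V1 (R1 x) = R1 (dd N x)"
  and a2: "\<And>x y. x\<in>car N \<Longrightarrow> y\<in>car N \<Longrightarrow> ad V2 (R2 x) (R2 y) = R2 (ad N x y)"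
  and s2: "\<And>s x. x\<in>car N \<Longrightarrow> sm V2 s (R2 x) = R2 (sm N s x)"
  and d2: "\<And>x. x\<in>car N \<Longrightarrow> dd V2 (R2 x) = R2 (dd N x)"
  and k: "\<And>x. x\<in>car N \<Longrightarrow> \<kappa> (R1 x) = R2 x"
  shows "chain_iso V1 V2 \<kappa>"
proof -
  interpret N: gcx N by (rule N)
  have inj: "inj_on \<kappa> (car V1)"
  proof (rule inj_onI)
    fix x y assume x: "x \<in> car V1" and y: "y \<in> car V1" and e: "\<kappa> x = \<kappa> y"
    obtain x' where x': "x'\<in>car N" "x = R1 x'" using x c1 by auto
    obtain y' where y': "y'\<in>car N" "y = R1 y'" using y c1 by auto
    have "R2 x' = R2 y'" using e x' y' k by simp
    then have "x' = y'" by (rule inj_onD[OF inj2 _ x'(1) y'(1)])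
    then show "x = y" using x' y' by simp
  qed
  have img: "\<kappa> ` car V1 = car V2"
  proof
    show "\<kappa> ` car V1 \<subseteq> car V2"
    proof
      fix z assume "z \<in> \<kappa> ` car V1"
      then obtain x where x: "x \<in> car V1" "z = \<kappa> x" by blast
      obtain x' where x': "x'\<in>car N" "x = R1 x'" using x c1 by auto
      show "z \<in> car V2" using x x' k c2 by simp
    qed
  next
    show "car V2 \<subseteq> \<kappa> ` car V1"
    proof
      fix z assume "z \<in> car V2"
      then obtain x' where x': "x'\<in>car N" "z = R2 x'" using c2 by auto
      have "R1 x' \<in> car V1" using c1 x' by simp
      moreover have "z = \<kappa> (R1 x')" using x' k by simp
      ultimately show "z \<in> \<kappa> ` car V1" by blast
    qed
  qed
  have ad: "\<forall>x\<in>car V1. \<forall>y\<in>car V1. \<kappa> (ad V1 x y) = ad V2 (\<kappa> x) (\<kappa> y)"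
  proof (intro ballI)
    fix x y assume "x\<in>car V1" "y\<in>car V1"
    then obtain x' y' where "x'\<in>car N" "y'\<in>car N" "x = R1 x'" "y = R1 y'" using c1 by auto
    then show "\<kappa> (ad V1 x y) = ad V2 (\<kappa> x) (\<kappa> y)" using k a1 a2 N.ad_car by simp
  qed
  have sm: "\<forall>s. \<forall>x\<in>car V1. \<kappa> (sm V1 s x) = sm V2 s (\<kappa> x)"
  proof (intro allI ballI)
    fix s x assume "x\<in>car V1"
    then obtain x' where "x'\<in>car N" "x = R1 x'" using c1 by auto
    then show "\<kappa> (sm V1 s x) = sm V2 s (\<kappa> x)" using k s1 s2 N.sm_car by simp
  qed
  have dd: "\<forall>x\<in>car V1. \<kappa> (dd V1 x) = dd V2 (\<kappa> x)"
  proof (intro ballI)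
    fix x assume "x\<in>car V1"
    then obtain x' where "x'\<in>car N" "x = R1 x'" using c1 by auto
    then show "\<kappa> (dd V1 x) = dd V2 (\<kappa> x)" using k d1 d2 N.dd_car by simp
  qed
  show ?thesis unfolding chain_iso_def lin_iso_def bij_betw_def by (intro conjI inj img ad sm dd)
qed

definition fam :: "('c \<Rightarrow> real) \<Rightarrow> ('c \<Rightarrow> 'k::zero) \<Rightarrow> real \<Rightarrow> 'c \<Rightarrow> 'k" where
  "fam f \<gamma> a = (\<lambda>c. if a \<le> f c then \<gamma> c else 0)"

definition ClD :: "(real \<Rightarrow> ('v,'k) cx) \<Rightarrow> 'v \<Rightarrow> (real \<times> 'v) set" where
  "ClD V x = {q. snd q = x \<and> x \<in> car (V (fst q))}"

lemma dl_cls_id: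
  fixes V :: "real \<Rightarrow> ('v,'k) cx"
  assumes "x \<in> car (V b)" shows "dl_cls V (\<lambda>_ _ x. x) b x = ClD V x"
proof (rule set_eqI)
  fix q :: "real \<times> 'v"
  have "\<exists>b'. b \<le> b' \<and> fst q \<le> b'" by (rule exI[where x="max b (fst q)"]) simp
  then show "q \<in> dl_cls V (\<lambda>_ _ x. x) b x \<longleftrightarrow> q \<in> ClD V x"
    using assms unfolding dl_cls_def dl_rel_def ClD_def by auto
qed

lemma ClD_mem: "x \<in> car (V b) \<Longrightarrow> (b, x) \<in> ClD V x"
  by (simp add: ClD_def)

lemma ClD_rep:
  assumes "x \<in> car (V b)"
  shows "snd (dl_rep (ClD V x)) = x \<and> x \<in> car (V (fst (dl_rep (ClD V x))))"
proof -
  have "dl_rep (ClD V x) \<in> ClD V x" unfolding dl_rep_def by (rule someI[where P="\<lambda>p. p \<in> ClD V x", OF ClD_mem[where V=V and b=b, OF assms]])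
  then show ?thesis by (simp add: ClD_def)
qed

lemma ClD_inj: "x \<in> car (V b) \<Longrightarrow> ClD V x = ClD V y \<Longrightarrow> x = y"
  using ClD_mem[of x V b] by (simp add: ClD_def)

lemma dirlim_car: "car (dirlim V (\<lambda>_ _ x. x)) = {ClD V x | b x. x \<in> car (V b)}"
proof -
  have "car (dirlim V (\<lambda>_ _ x. x)) = {dl_cls V (\<lambda>_ _ x. x) b x | b x. x \<in> car (V b)}"
    by (simp add: dirlim_def)
  also have "\<dots> = {ClD V x | b x. x \<in> car (V b)}"
  proof (rule Collect_cong)
    fix X
    show "(\<exists>b x. X = dl_cls V (\<lambda>_ _ x. x) b x \<and> x \<in> car (V b)) = (\<exists>b x. X = ClD V x \<and> x \<in> car (V b))"
    proof
      assume "\<exists>b x. X = dl_cls V (\<lambda>_ _ x. x) b x \<and> x \<in> car (V b)"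
      then obtain b x where bx: "X = dl_cls V (\<lambda>_ _ x. x) b x" "x \<in> car (V b)" by blast
      then have "X = ClD V x" using dl_cls_id[where V=V and b=b] by simp
      then show "\<exists>b x. X = ClD V x \<and> x \<in> car (V b)" using bx(2) by blast
    next
      assume "\<exists>b x. X = ClD V x \<and> x \<in> car (V b)"
      then obtain b x where bx: "X = ClD V x" "x \<in> car (V b)" by blast
      then have "X = dl_cls V (\<lambda>_ _ x. x) b x" using dl_cls_id[where V=V and b=b] by simp
      then show "\<exists>b x. X = dl_cls V (\<lambda>_ _ x. x) b x \<and> x \<in> car (V b)" using bx(2) by blast
    qed
  qed
  finally show ?thesis .
qed

lemma dirlim_ad:
  assumes x: "x \<in> car (V b1)" and y: "y \<in> car (V b2)"
  and mono: "\<And>b b' z. b \<le> b' \<Longrightarrow> z \<in> car (V b) \<Longrightarrow> z \<in> car (V b')"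
  and op: "\<And>b. x \<in> car (V b) \<Longrightarrow> y \<in> car (V b) \<Longrightarrow> ad (V b) x y = A \<and> A \<in> car (V b)"
  shows "ad (dirlim V (\<lambda>_ _ x. x)) (ClD V x) (ClD V y) = ClD V A"
proof -
  define p1 where "p1 = dl_rep (ClD V x)"
  define p2 where "p2 = dl_rep (ClD V y)"
  have 1: "snd p1 = x" "x \<in> car (V (fst p1))" using ClD_rep[where V=V and b=b1, OF x] p1_def by auto
  have 2: "snd p2 = y" "y \<in> car (V (fst p2))" using ClD_rep[where V=V and b=b2, OF y] p2_def by auto
  define b where "b = max (fst p1) (fst p2)"
  have xb: "x \<in> car (V b)" using mono[of "fst p1" b] 1 b_def by simp
  have yb: "y \<in> car (V b)" using mono[of "fst p2" b] 2 b_def by simp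
  have "ad (dirlim V (\<lambda>_ _ x. x)) (ClD V x) (ClD V y) = dl_cls V (\<lambda>_ _ x. x) b (ad (V b) x y)"
    by (simp add: dirlim_def Let_def p1_def[symmetric] p2_def[symmetric] b_def 1 2)
  also have "\<dots> = ClD V A" using op[OF xb yb] dl_cls_id[where V=V and b=b] by simp
  finally show ?thesis .
qed

lemma dirlim_sm:
  assumes x: "x \<in> car (V b0)"
  and op: "\<And>b. x \<in> car (V b) \<Longrightarrow> sm (V b) s x = A \<and> A \<in> car (V b)"
  shows "sm (dirlim V (\<lambda>_ _ x. x)) s (ClD V x) = ClD V A"
proof -
  define p1 where "p1 = dl_rep (ClD V x)"
  have 1: "snd p1 = x" "x \<in> car (V (fst p1))" using ClD_rep[where V=V and b=b0, OF x] p1_def by auto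
  have "sm (dirlim V (\<lambda>_ _ x. x)) s (ClD V x) = dl_cls V (\<lambda>_ _ x. x) (fst p1) (sm (V (fst p1)) s x)"
    by (simp add: dirlim_def p1_def[symmetric] 1)
  also have "\<dots> = ClD V A" using op[OF 1(2)] dl_cls_id[where V=V and b="fst p1"] by simp
  finally show ?thesis .
qed

lemma dirlim_dd:
  assumes x: "x \<in> car (V b0)"
  and op: "\<And>b. x \<in> car (V b) \<Longrightarrow> dd (V b) x = A \<and> A \<in> car (V b)"
  shows "dd (dirlim V (\<lambda>_ _ x. x)) (ClD V x) = ClD V A"
proof -
  define p1 where "p1 = dl_rep (ClD V x)"
  have 1: "snd p1 = x" "x \<in> car (V (fst p1))" using ClD_rep[where V=V and b=b0, OF x] p1_def by auto
  have "dd (dirlim V (\<lambda>_ _ x. x)) (ClD V x) = dl_cls V (\<lambda>_ _ x. x) (fst p1) (dd (V (fst p1)) x)"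
    by (simp add: dirlim_def p1_def[symmetric] 1)
  also have "\<dots> = ClD V A" using op[OF 1(2)] dl_cls_id[where V=V and b="fst p1"] by simp
  finally show ?thesis .
qed

lemma dirlim_zr:
  assumes "zr (V 0) \<in> car (V 0)"
  shows "zr (dirlim V (\<lambda>_ _ x. x)) = ClD V (zr (V 0))"
  using dl_cls_id[where V=V and b=0, OF assms] by (simp add: dirlim_def)

lemma Cab_fin:
  assumes "floer_triple C f m" shows "finite (Cab C f a b)"
proof (cases "a \<le> b")
  case True then show ?thesis using assms by (simp add: floer_triple_def Cab_def)
next
  case False then have "Cab C f a b = {}" by (auto simp: Cab_def)
  then show ?thesis by simp
qed

lemma CM_car: "x \<in> car (CM C f m a b) \<longleftrightarrow> (\<forall>c. x c \<noteq> 0 \<longrightarrow> c \<in> C \<and> a \<le> f c \<and> f c \<le> b)"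
  by (simp add: CM_def Cab_def)

lemma CM_mono: "b \<le> b' \<Longrightarrow> x \<in> car (CM C f m a b) \<Longrightarrow> x \<in> car (CM C f m a b')"
  unfolding CM_car by force

lemma CM_dd: "dd (CM C f m a b) x c' = (if c' \<in> Cab C f a b then \<Sum>c\<in>Cab C f a b. m c' c * x c else 0)"
  by (simp add: CM_def)

lemma CM_dd_car: "dd (CM C f m a b) x \<in> car (CM C f m a b)"
  by (simp add: CM_def)

lemma Nov_car: "\<gamma> \<in> car (Nov C f m) \<longleftrightarrow> (\<forall>c. \<gamma> c \<noteq> 0 \<longrightarrow> c \<in> C) \<and> (\<forall>b. finite {c. \<gamma> c \<noteq> 0 \<and> b < f c})"
  by (simp add: Nov_def)

lemma Nov_bound:
  assumes "\<gamma> \<in> car (Nov C f m)" shows "\<exists>b. \<forall>c. \<gamma> c \<noteq> 0 \<longrightarrow> a \<le> f c \<longrightarrow> f c \<le> b"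
proof -
  define F where "F = {c. \<gamma> c \<noteq> 0 \<and> a - 1 < f c}"
  have fin: "finite F" using assms unfolding F_def Nov_car by blast
  have "\<forall>c. \<gamma> c \<noteq> 0 \<longrightarrow> a \<le> f c \<longrightarrow> f c \<le> Max (insert a (f ` F))"
  proof (intro allI impI)
    fix c assume "\<gamma> c \<noteq> 0" "a \<le> f c"
    then have "c \<in> F" unfolding F_def by simp
    then show "f c \<le> Max (insert a (f ` F))" using fin by (intro Max_ge) auto
  qed
  then show ?thesis by blast
qed

lemma Nov_bound0:
  assumes "\<gamma> \<in> car (Nov C f m)" shows "\<exists>b. \<forall>c. \<gamma> c \<noteq> 0 \<longrightarrow> f c \<le> b"
proof -
  obtain b where b: "\<forall>c. \<gamma> c \<noteq> 0 \<longrightarrow> 0 \<le> f c \<longrightarrow> f c \<le> b" using Nov_bound[OF assms] by blast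
  have "\<forall>c. \<gamma> c \<noteq> 0 \<longrightarrow> f c \<le> max b 0"
  proof (intro allI impI)
    fix c assume "\<gamma> c \<noteq> 0" then show "f c \<le> max b 0" using b by (cases "0 \<le> f c") auto
  qed
  then show ?thesis by blast
qed

lemma NovD:
  assumes fl: "floer_triple C f m" and sC: "\<forall>c. \<gamma> c \<noteq> 0 \<longrightarrow> c \<in> C"
  and bd: "\<forall>c. \<gamma> c \<noteq> 0 \<longrightarrow> f c' \<le> f c \<longrightarrow> f c \<le> b"
  shows "dd (Nov C f m) \<gamma> c' = (if c' \<in> C \<and> f c' \<le> b then \<Sum>c\<in>Cab C f (f c') b. m c' c * \<gamma> c else 0)"
proof -
  have mm: "\<And>c1 c2. c1\<in>C \<Longrightarrow> c2\<in>C \<Longrightarrow> m c1 c2 \<noteq> 0 \<Longrightarrow> f c1 < f c2"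
    using fl by (simp add: floer_triple_def)
  define S where "S = {c \<in> C. \<gamma> c \<noteq> 0 \<and> m c' c \<noteq> 0}"
  have ddN: "dd (Nov C f m) \<gamma> c' = (if c' \<in> C then \<Sum>c\<in>S. m c' c * \<gamma> c else 0)"
    by (simp add: Nov_def S_def)
  show ?thesis
  proof (cases "c' \<in> C")
    case False then show ?thesis using ddN by simp
  next
    case True
    have S: "S \<subseteq> Cab C f (f c') b"
    proof
      fix c assume c: "c \<in> S"
      then have "f c' < f c" using mm True unfolding S_def by blast
      then show "c \<in> Cab C f (f c') b" using c bd unfolding Cab_def S_def by auto
    qed
    show ?thesis
    proof (cases "f c' \<le> b")
      case True2: True
      have "(\<Sum>c\<in>S. m c' c * \<gamma> c) = (\<Sum>c\<in>Cab C f (f c') b. m c' c * \<gamma> c)"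
        by (rule sum.mono_neutral_left[OF Cab_fin[OF fl] S]) (auto simp: Cab_def S_def)
      then show ?thesis using True True2 ddN by simp
    next
      case False
      have "Cab C f (f c') b = {}" using False by (auto simp: Cab_def)
      then have "S = {}" using S by blast
      then show ?thesis using True False ddN by simp
    qed
  qed
qed

lemma DD:
  assumes fl: "floer_triple C f m" and sC: "\<forall>c. \<gamma> c \<noteq> 0 \<longrightarrow> c \<in> C"
  and bd: "\<forall>c. \<gamma> c \<noteq> 0 \<longrightarrow> a \<le> f c \<longrightarrow> f c \<le> b"
  shows "dd (CM C f m a b) (fam f \<gamma> a) = fam f (dd (Nov C f m) \<gamma>) a"
proof (rule ext)
  fix c'
  show "dd (CM C f m a b) (fam f \<gamma> a) c' = fam f (dd (Nov C f m) \<gamma>) a c'"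
  proof (cases "a \<le> f c'")
    case False
    then have "c' \<notin> Cab C f a b" by (simp add: Cab_def)
    then show ?thesis using False by (simp add: CM_dd fam_def)
  next
    case True
    have h: "\<forall>c. \<gamma> c \<noteq> 0 \<longrightarrow> f c' \<le> f c \<longrightarrow> f c \<le> b" using bd True by auto
    have nd: "dd (Nov C f m) \<gamma> c' = (if c' \<in> C \<and> f c' \<le> b then \<Sum>c\<in>Cab C f (f c') b. m c' c * \<gamma> c else 0)"
      by (rule NovD[OF fl sC h])
    have cin: "(c' \<in> Cab C f a b) = (c' \<in> C \<and> f c' \<le> b)" using True by (auto simp: Cab_def)
    show ?thesis
    proof (cases "c' \<in> C \<and> f c' \<le> b")
      case False
      have nc: "c' \<notin> Cab C f a b" using False cin by simp
      have "dd (Nov C f m) \<gamma> c' = 0" using nd False by simp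
      then show ?thesis using nc True by (simp add: CM_dd fam_def)
    next
      case cc: True
      have mm: "\<And>c1 c2. c1\<in>C \<Longrightarrow> c2\<in>C \<Longrightarrow> m c1 c2 \<noteq> 0 \<Longrightarrow> f c1 < f c2"
        using fl by (simp add: floer_triple_def)
      have "(\<Sum>c\<in>Cab C f a b. m c' c * fam f \<gamma> a c) = (\<Sum>c\<in>Cab C f a b. m c' c * \<gamma> c)"
        by (rule sum.cong) (auto simp: Cab_def fam_def)
      also have "\<dots> = (\<Sum>c\<in>Cab C f (f c') b. m c' c * \<gamma> c)"
      proof (rule sum.mono_neutral_right[OF Cab_fin[OF fl]])
        show "Cab C f (f c') b \<subseteq> Cab C f a b" using True by (auto simp: Cab_def)
        show "\<forall>i\<in>Cab C f a b - Cab C f (f c') b. m c' i * \<gamma> i = 0"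
        proof
          fix i assume i: "i \<in> Cab C f a b - Cab C f (f c') b"
          then have iC: "i \<in> C" and lt: "f i < f c'" by (auto simp: Cab_def)
          have "m c' i = 0"
          proof (rule ccontr)
            assume "m c' i \<noteq> 0" then have "f c' < f i" using mm cc iC by blast
            then show False using lt by simp
          qed
          then show "m c' i * \<gamma> i = 0" by simp
        qed
      qed
      finally have e: "(\<Sum>c\<in>Cab C f a b. m c' c * fam f \<gamma> a c) = (\<Sum>c\<in>Cab C f (f c') b. m c' c * \<gamma> c)" .
      have nc: "c' \<in> Cab C f a b" using cc cin by simp
      have "dd (Nov C f m) \<gamma> c' = (\<Sum>c\<in>Cab C f (f c') b. m c' c * \<gamma> c)" using nd cc by simp
      then show ?thesis using nc True e by (simp add: CM_dd fam_def)
    qed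
  qed
qed

definition IB :: "'c set \<Rightarrow> ('c \<Rightarrow> real) \<Rightarrow> ('c \<Rightarrow> 'c \<Rightarrow> 'k::field) \<Rightarrow> real \<Rightarrow> (real \<Rightarrow> 'c \<Rightarrow> 'k, 'k) cx" where
  "IB C f m b = invlim (\<lambda>a. CM C f m a b) (projp f)"

lemma DI_alt: "DI C f m = dirlim (IB C f m) (\<lambda>_ _ x. x)"
  by (simp add: DI_def incl_def IB_def[abs_def])

lemma incl_eq: "incl = (\<lambda>_ _ x. x)"
  by (simp add: incl_def fun_eq_iff)

lemma IB_car: "x \<in> car (IB C f m b) \<longleftrightarrow> (\<forall>a. x a \<in> car (CM C f m a b)) \<and> (\<forall>a1 a2. a1 \<le> a2 \<longrightarrow> projp f a2 a1 (x a1) = x a2)"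
  by (simp add: IB_def invlim_def)

lemma projp_fam: "a1 \<le> a2 \<Longrightarrow> projp f a2 a1 (fam f \<gamma> a1) = fam f \<gamma> a2"
  by (auto simp: projp_def fam_def fun_eq_iff)

lemma IB_fam: "fam f \<gamma> \<in> car (IB C f m b) \<longleftrightarrow> (\<forall>c. \<gamma> c \<noteq> 0 \<longrightarrow> c \<in> C \<and> f c \<le> b)"
proof
  assume h: "fam f \<gamma> \<in> car (IB C f m b)"
  show "\<forall>c. \<gamma> c \<noteq> 0 \<longrightarrow> c \<in> C \<and> f c \<le> b"
  proof (intro allI impI)
    fix c assume c: "\<gamma> c \<noteq> 0"
    have "fam f \<gamma> (f c) \<in> car (CM C f m (f c) b)" using h by (simp add: IB_car)
    moreover have "fam f \<gamma> (f c) c \<noteq> 0" using c by (simp add: fam_def)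
    ultimately show "c \<in> C \<and> f c \<le> b" unfolding CM_car by blast
  qed
next
  assume h: "\<forall>c. \<gamma> c \<noteq> 0 \<longrightarrow> c \<in> C \<and> f c \<le> b"
  have "\<forall>a. fam f \<gamma> a \<in> car (CM C f m a b)"
    using h by (simp add: CM_car fam_def)
  then show "fam f \<gamma> \<in> car (IB C f m b)" by (simp add: IB_car projp_fam)
qed

lemma IB_elem:
  assumes x: "x \<in> car (IB C f m b)" shows "x = fam f (\<lambda>c. x (f c) c)"
proof (intro ext)
  fix a c
  show "x a c = fam f (\<lambda>c. x (f c) c) a c"
  proof (cases "a \<le> f c")
    case True
    have "projp f (f c) a (x a) = x (f c)" using x True by (simp add: IB_car)
    then have "projp f (f c) a (x a) c = x (f c) c" by simp
    then show ?thesis using True by (simp add: projp_def fam_def)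
  next
    case False
    have "x a \<in> car (CM C f m a b)" using x by (simp add: IB_car)
    then have "x a c = 0" using False unfolding CM_car by force
    then show ?thesis using False by (simp add: fam_def)
  qed
qed

lemma IB_mono: "b \<le> b' \<Longrightarrow> x \<in> car (IB C f m b) \<Longrightarrow> x \<in> car (IB C f m b')"
  unfolding IB_car using CM_mono by blast

lemma IB_ad: "ad (IB C f m b) (fam f \<gamma>) (fam f \<delta>) = fam f (\<lambda>c. \<gamma> c + \<delta> c)"
  by (simp add: IB_def invlim_def CM_def fam_def fun_eq_iff)

lemma IB_sm: "sm (IB C f m b) s (fam f \<gamma>) = fam f (\<lambda>c. s * \<gamma> c)"
  by (simp add: IB_def invlim_def CM_def fam_def fun_eq_iff)

lemma IB_dd:
  assumes fl: "floer_triple C f m" and h: "\<forall>c. \<gamma> c \<noteq> 0 \<longrightarrow> c \<in> C \<and> f c \<le> b"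
  shows "dd (IB C f m b) (fam f \<gamma>) = fam f (dd (Nov C f m) \<gamma>)"
proof (rule ext)
  fix a
  have sC: "\<forall>c. \<gamma> c \<noteq> 0 \<longrightarrow> c \<in> C" using h by blast
  have bd: "\<forall>c. \<gamma> c \<noteq> 0 \<longrightarrow> a \<le> f c \<longrightarrow> f c \<le> b" using h by blast
  have "dd (IB C f m b) (fam f \<gamma>) a = dd (CM C f m a b) (fam f \<gamma> a)"
    by (simp add: IB_def invlim_def)
  also have "\<dots> = fam f (dd (Nov C f m) \<gamma>) a" by (rule DD[OF fl sC bd])
  finally show "dd (IB C f m b) (fam f \<gamma>) a = fam f (dd (Nov C f m) \<gamma>) a" .
qed

lemma Nov_dd_supp:
  assumes fl: "floer_triple C f m" and h: "\<forall>c. \<gamma> c \<noteq> 0 \<longrightarrow> c \<in> C \<and> f c \<le> b"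
  shows "\<forall>c. dd (Nov C f m) \<gamma> c \<noteq> 0 \<longrightarrow> c \<in> C \<and> f c \<le> b"
proof (intro allI impI)
  fix c' assume nz: "dd (Nov C f m) \<gamma> c' \<noteq> 0"
  have sC: "\<forall>c. \<gamma> c \<noteq> 0 \<longrightarrow> c \<in> C" using h by blast
  have bd: "\<forall>c. \<gamma> c \<noteq> 0 \<longrightarrow> f c' \<le> f c \<longrightarrow> f c \<le> b" using h by blast
  show "c' \<in> C \<and> f c' \<le> b" using NovD[OF fl sC bd] nz by (cases "c' \<in> C \<and> f c' \<le> b") auto
qed

lemma Nov_gcx:
  assumes fl: "floer_triple C f m" shows "gcx (Nov C f m)"
proof
  let ?N = "Nov C f m"
  have bdd: "\<And>x a. x \<in> car ?N \<Longrightarrow> \<exists>b. \<forall>c. x c \<noteq> 0 \<longrightarrow> a \<le> f c \<longrightarrow> f c \<le> b" by (rule Nov_bound)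
  have supp: "\<And>x c. x \<in> car ?N \<Longrightarrow> x c \<noteq> 0 \<Longrightarrow> c \<in> C" by (simp add: Nov_car)
  show "zr ?N \<in> car ?N" by (simp add: Nov_def)
  show "ad ?N x y \<in> car ?N" if "x \<in> car ?N" "y \<in> car ?N" for x y
  proof -
    have e: "ad ?N x y = (\<lambda>c. x c + y c)" by (simp add: Nov_def)
    have 1: "\<forall>c. x c + y c \<noteq> 0 \<longrightarrow> c \<in> C"
    proof (intro allI impI)
      fix c assume "x c + y c \<noteq> 0" then have "x c \<noteq> 0 \<or> y c \<noteq> 0" by auto
      then show "c \<in> C" using supp that by blast
    qed
    have 2: "finite {c. x c + y c \<noteq> 0 \<and> b < f c}" for b
    proof -
      have "{c. x c + y c \<noteq> 0 \<and> b < f c} \<subseteq> {c. x c \<noteq> 0 \<and> b < f c} \<union> {c. y c \<noteq> 0 \<and> b < f c}"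
        by auto
      moreover have "finite ({c. x c \<noteq> 0 \<and> b < f c} \<union> {c. y c \<noteq> 0 \<and> b < f c})"
        using that unfolding Nov_car by blast
      ultimately show ?thesis by (rule finite_subset)
    qed
    show ?thesis unfolding e Nov_car using 1 2 by blast
  qed
  show "sm ?N s x \<in> car ?N" if "x \<in> car ?N" for s x
  proof -
    have e: "sm ?N s x = (\<lambda>c. s * x c)" by (simp add: Nov_def)
    have 1: "\<forall>c. s * x c \<noteq> 0 \<longrightarrow> c \<in> C" using supp that by force
    have 2: "finite {c. s * x c \<noteq> 0 \<and> b < f c}" for b
    proof -
      have "{c. s * x c \<noteq> 0 \<and> b < f c} \<subseteq> {c. x c \<noteq> 0 \<and> b < f c}" by auto
      moreover have "finite {c. x c \<noteq> 0 \<and> b < f c}" using that unfolding Nov_car by blast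
      ultimately show ?thesis by (rule finite_subset)
    qed
    show ?thesis unfolding e Nov_car using 1 2 by blast
  qed
  show "dd ?N x \<in> car ?N" if x: "x \<in> car ?N" for x
  proof -
    have s1: "\<forall>c. dd ?N x c \<noteq> 0 \<longrightarrow> c \<in> C" by (simp add: Nov_def)
    have s2: "finite {c. dd ?N x c \<noteq> 0 \<and> b' < f c}" for b'
    proof -
      obtain B where B: "\<forall>c. x c \<noteq> 0 \<longrightarrow> b' \<le> f c \<longrightarrow> f c \<le> B" using bdd[OF x] by blast
      have "{c. dd ?N x c \<noteq> 0 \<and> b' < f c} \<subseteq> Cab C f b' B"
      proof
        fix c' assume c': "c' \<in> {c. dd ?N x c \<noteq> 0 \<and> b' < f c}"
        have sC: "\<forall>c. x c \<noteq> 0 \<longrightarrow> c \<in> C" using supp x by blast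
        have h: "\<forall>c. x c \<noteq> 0 \<longrightarrow> f c' \<le> f c \<longrightarrow> f c \<le> B" using B c' by auto
        show "c' \<in> Cab C f b' B" using NovD[OF fl sC h] c'
          by (cases "c' \<in> C \<and> f c' \<le> B") (auto simp: Cab_def)
      qed
      then show ?thesis using Cab_fin[OF fl] by (rule finite_subset)
    qed
    show ?thesis using s1 s2 by (simp add: Nov_car)
  qed
  show "ad ?N (ad ?N x y) z = ad ?N x (ad ?N y z)" for x y z by (simp add: Nov_def algebra_simps)
  show "ad ?N x y = ad ?N y x" for x y by (simp add: Nov_def algebra_simps)
  show "ad ?N (zr ?N) x = x" for x by (simp add: Nov_def)
  show "\<exists>y\<in>car ?N. ad ?N x y = zr ?N" if "x \<in> car ?N" for x
  proof
    show "(\<lambda>c. - x c) \<in> car ?N" using that by (simp add: Nov_def)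
    show "ad ?N x (\<lambda>c. - x c) = zr ?N" by (simp add: Nov_def)
  qed
  show "dd ?N (ad ?N x y) = ad ?N (dd ?N x) (dd ?N y)" if x: "x \<in> car ?N" and y: "y \<in> car ?N" for x y
  proof (rule ext)
    fix c'
    obtain B1 where B1: "\<forall>c. x c \<noteq> 0 \<longrightarrow> f c' \<le> f c \<longrightarrow> f c \<le> B1" using bdd[OF x] by blast
    obtain B2 where B2: "\<forall>c. y c \<noteq> 0 \<longrightarrow> f c' \<le> f c \<longrightarrow> f c \<le> B2" using bdd[OF y] by blast
    define B where "B = max B1 B2"
    have hx: "\<forall>c. x c \<noteq> 0 \<longrightarrow> f c' \<le> f c \<longrightarrow> f c \<le> B" using B1 B_def by force
    have hy: "\<forall>c. y c \<noteq> 0 \<longrightarrow> f c' \<le> f c \<longrightarrow> f c \<le> B" using B2 B_def by force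
    have hxy: "\<forall>c. x c + y c \<noteq> 0 \<longrightarrow> f c' \<le> f c \<longrightarrow> f c \<le> B" using hx hy by force
    have sx: "\<forall>c. x c \<noteq> 0 \<longrightarrow> c \<in> C" using supp x by blast
    have sy: "\<forall>c. y c \<noteq> 0 \<longrightarrow> c \<in> C" using supp y by blast
    have sxy: "\<forall>c. x c + y c \<noteq> 0 \<longrightarrow> c \<in> C" using sx sy by force
    have e: "ad ?N x y = (\<lambda>c. x c + y c)" by (simp add: Nov_def)
    show "dd ?N (ad ?N x y) c' = ad ?N (dd ?N x) (dd ?N y) c'"
      unfolding e using NovD[OF fl sx hx] NovD[OF fl sy hy] NovD[OF fl sxy hxy]
      by (simp add: Nov_def[of C f m] sum.distrib distrib_left)
  qed
  show "sm ?N s (ad ?N x y) = ad ?N (sm ?N s x) (sm ?N s y)" for s x y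
    by (simp add: Nov_def algebra_simps)
  show "dd ?N (sm ?N s x) = sm ?N s (dd ?N x)" if x: "x \<in> car ?N" for s x
  proof (rule ext)
    fix c'
    obtain B where B: "\<forall>c. x c \<noteq> 0 \<longrightarrow> f c' \<le> f c \<longrightarrow> f c \<le> B" using bdd[OF x] by blast
    have hs: "\<forall>c. s * x c \<noteq> 0 \<longrightarrow> f c' \<le> f c \<longrightarrow> f c \<le> B" using B by force
    have sx: "\<forall>c. x c \<noteq> 0 \<longrightarrow> c \<in> C" using supp x by blast
    have ss: "\<forall>c. s * x c \<noteq> 0 \<longrightarrow> c \<in> C" using sx by force
    have e: "sm ?N s x = (\<lambda>c. s * x c)" by (simp add: Nov_def)
    show "dd ?N (sm ?N s x) c' = sm ?N s (dd ?N x) c'"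
      unfolding e using NovD[OF fl sx B] NovD[OF fl ss hs]
      by (simp add: Nov_def[of C f m] sum_distrib_left mult.left_commute)
  qed
qed

definition XD :: "'c set \<Rightarrow> ('c \<Rightarrow> real) \<Rightarrow> ('c \<Rightarrow> 'c \<Rightarrow> 'k::field) \<Rightarrow> ('c \<Rightarrow> 'k) \<Rightarrow> (real \<times> (real \<Rightarrow> 'c \<Rightarrow> 'k)) set" where
  "XD C f m \<gamma> = ClD (IB C f m) (fam f \<gamma>)"

lemma Nov_IB:
  assumes "\<gamma> \<in> car (Nov C f m)" shows "\<exists>b. fam f \<gamma> \<in> car (IB C f m b)"
proof -
  obtain b where b: "\<forall>c. \<gamma> c \<noteq> 0 \<longrightarrow> f c \<le> b" using Nov_bound0[OF assms] by blast
  have "\<forall>c. \<gamma> c \<noteq> 0 \<longrightarrow> c \<in> C" using assms by (simp add: Nov_car)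
  then have "fam f \<gamma> \<in> car (IB C f m b)" using b by (simp add: IB_fam)
  then show ?thesis by blast
qed

lemma DI_car:
  assumes fl: "floer_triple C f m"
  shows "car (DI C f m) = XD C f m ` car (Nov C f m)"
proof
  show "car (DI C f m) \<subseteq> XD C f m ` car (Nov C f m)"
  proof
    fix X assume "X \<in> car (DI C f m)"
    then obtain b x where bx: "X = ClD (IB C f m) x" "x \<in> car (IB C f m b)"
      unfolding DI_alt dirlim_car by blast
    define \<gamma> where "\<gamma> = (\<lambda>c. x (f c) c)"
    have xe: "x = fam f \<gamma>" unfolding \<gamma>_def by (rule IB_elem[OF bx(2)])
    have sp: "\<forall>c. \<gamma> c \<noteq> 0 \<longrightarrow> c \<in> C \<and> f c \<le> b" using bx(2) xe IB_fam by metis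
    have fin: "finite {c. \<gamma> c \<noteq> 0 \<and> b' < f c}" for b'
    proof -
      have "{c. \<gamma> c \<noteq> 0 \<and> b' < f c} \<subseteq> Cab C f b' b" using sp by (auto simp: Cab_def)
      then show ?thesis using Cab_fin[OF fl] by (rule finite_subset)
    qed
    have "\<gamma> \<in> car (Nov C f m)" using sp fin by (simp add: Nov_car)
    moreover have "X = XD C f m \<gamma>" using bx xe by (simp add: XD_def)
    ultimately show "X \<in> XD C f m ` car (Nov C f m)" by blast
  qed
next
  show "XD C f m ` car (Nov C f m) \<subseteq> car (DI C f m)"
  proof
    fix X assume "X \<in> XD C f m ` car (Nov C f m)"
    then obtain \<gamma> where g: "\<gamma> \<in> car (Nov C f m)" "X = XD C f m \<gamma>" by blast
    obtain b where "fam f \<gamma> \<in> car (IB C f m b)" using Nov_IB[OF g(1)] by blast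
    then show "X \<in> car (DI C f m)" unfolding DI_alt dirlim_car XD_def g(2) by blast
  qed
qed

lemma XD_rep:
  assumes "\<gamma> \<in> car (Nov C f m)"
  shows "snd (dl_rep (XD C f m \<gamma>)) = fam f \<gamma> \<and> fam f \<gamma> \<in> car (IB C f m (fst (dl_rep (XD C f m \<gamma>))))"
proof -
  obtain b where b: "fam f \<gamma> \<in> car (IB C f m b)" using Nov_IB[OF assms] by blast
  show ?thesis unfolding XD_def by (rule ClD_rep[where V="IB C f m" and b=b, OF b])
qed

lemma nov_DI_XD: "\<gamma> \<in> car (Nov C f m) \<Longrightarrow> nov_DI f (XD C f m \<gamma>) = \<gamma>"
  using XD_rep[of \<gamma> C f m] by (simp add: nov_DI_def fam_def)

lemma DI_ad:
  assumes "\<gamma> \<in> car (Nov C f m)" "\<delta> \<in> car (Nov C f m)"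
  shows "ad (DI C f m) (XD C f m \<gamma>) (XD C f m \<delta>) = XD C f m (ad (Nov C f m) \<gamma> \<delta>)"
proof -
  obtain b1 where b1: "fam f \<gamma> \<in> car (IB C f m b1)" using Nov_IB[OF assms(1)] by blast
  obtain b2 where b2: "fam f \<delta> \<in> car (IB C f m b2)" using Nov_IB[OF assms(2)] by blast
  have e: "ad (Nov C f m) \<gamma> \<delta> = (\<lambda>c. \<gamma> c + \<delta> c)" by (simp add: Nov_def)
  show ?thesis unfolding DI_alt XD_def e
  proof (rule dirlim_ad[OF b1 b2])
    show "\<And>b b' z. b \<le> b' \<Longrightarrow> z \<in> car (IB C f m b) \<Longrightarrow> z \<in> car (IB C f m b')" by (rule IB_mono)
    fix b assume x: "fam f \<gamma> \<in> car (IB C f m b)" and y: "fam f \<delta> \<in> car (IB C f m b)"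
    have "\<forall>c. \<gamma> c + \<delta> c \<noteq> 0 \<longrightarrow> c \<in> C \<and> f c \<le> b"
    proof (intro allI impI)
      fix c assume "\<gamma> c + \<delta> c \<noteq> 0" then have "\<gamma> c \<noteq> 0 \<or> \<delta> c \<noteq> 0" by auto
      then show "c \<in> C \<and> f c \<le> b" using x y unfolding IB_fam by blast
    qed
    then show "ad (IB C f m b) (fam f \<gamma>) (fam f \<delta>) = fam f (\<lambda>c. \<gamma> c + \<delta> c) \<and> fam f (\<lambda>c. \<gamma> c + \<delta> c) \<in> car (IB C f m b)"
      by (simp add: IB_ad IB_fam)
  qed
qed

lemma DI_sm:
  assumes "\<gamma> \<in> car (Nov C f m)"
  shows "sm (DI C f m) s (XD C f m \<gamma>) = XD C f m (sm (Nov C f m) s \<gamma>)"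
proof -
  obtain b1 where b1: "fam f \<gamma> \<in> car (IB C f m b1)" using Nov_IB[OF assms(1)] by blast
  have e: "sm (Nov C f m) s \<gamma> = (\<lambda>c. s * \<gamma> c)" by (simp add: Nov_def)
  show ?thesis unfolding DI_alt XD_def e
  proof (rule dirlim_sm[where V="IB C f m", OF b1])
    fix b assume x: "fam f \<gamma> \<in> car (IB C f m b)"
    have "\<forall>c. s * \<gamma> c \<noteq> 0 \<longrightarrow> c \<in> C \<and> f c \<le> b" using x unfolding IB_fam by force
    then show "sm (IB C f m b) s (fam f \<gamma>) = fam f (\<lambda>c. s * \<gamma> c) \<and> fam f (\<lambda>c. s * \<gamma> c) \<in> car (IB C f m b)"
      by (simp add: IB_sm IB_fam)
  qed
qed

lemma DI_dd:
  assumes fl: "floer_triple C f m" and g: "\<gamma> \<in> car (Nov C f m)"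
  shows "dd (DI C f m) (XD C f m \<gamma>) = XD C f m (dd (Nov C f m) \<gamma>)"
proof -
  obtain b1 where b1: "fam f \<gamma> \<in> car (IB C f m b1)" using Nov_IB[OF g] by blast
  show ?thesis unfolding DI_alt XD_def
  proof (rule dirlim_dd[where V="IB C f m", OF b1])
    fix b assume x: "fam f \<gamma> \<in> car (IB C f m b)"
    have h: "\<forall>c. \<gamma> c \<noteq> 0 \<longrightarrow> c \<in> C \<and> f c \<le> b" using x unfolding IB_fam .
    show "dd (IB C f m b) (fam f \<gamma>) = fam f (dd (Nov C f m) \<gamma>) \<and> fam f (dd (Nov C f m) \<gamma>) \<in> car (IB C f m b)"
      using IB_dd[OF fl h] Nov_dd_supp[OF fl h] by (simp add: IB_fam)
  qed
qed

lemma fam_zero: "fam f (\<lambda>c. 0) a = (\<lambda>c. 0)"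
  by (simp add: fam_def)

lemma DI_zr: "zr (DI C f m) = XD C f m (zr (Nov C f m))"
proof -
  have z: "zr (IB C f m 0) = fam f (\<lambda>c. 0)" by (simp add: IB_def invlim_def CM_def fam_def fun_eq_iff)
  have "fam f (\<lambda>c. 0) \<in> car (IB C f m 0)" by (simp add: IB_fam)
  then have "zr (IB C f m 0) \<in> car (IB C f m 0)" using z by simp
  then have "zr (dirlim (IB C f m) (\<lambda>_ _ x. x)) = ClD (IB C f m) (zr (IB C f m 0))"
    by (rule dirlim_zr[where V="IB C f m"])
  then show ?thesis unfolding DI_alt XD_def using z by (simp add: Nov_def)
qed

definition YD :: "'c set \<Rightarrow> ('c \<Rightarrow> real) \<Rightarrow> ('c \<Rightarrow> 'c \<Rightarrow> 'k::field) \<Rightarrow> ('c \<Rightarrow> 'k) \<Rightarrow> real \<Rightarrow> (real \<times> ('c \<Rightarrow> 'k)) set" where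
  "YD C f m \<gamma> = (\<lambda>a. ClD (\<lambda>b. CM C f m a b) (fam f \<gamma> a))"

lemma Nov_CM:
  assumes "\<gamma> \<in> car (Nov C f m)" shows "\<exists>b. fam f \<gamma> a \<in> car (CM C f m a b)"
proof -
  obtain b where b: "\<forall>c. \<gamma> c \<noteq> 0 \<longrightarrow> a \<le> f c \<longrightarrow> f c \<le> b" using Nov_bound[OF assms] by blast
  have "\<forall>c. \<gamma> c \<noteq> 0 \<longrightarrow> c \<in> C" using assms by (simp add: Nov_car)
  then have "fam f \<gamma> a \<in> car (CM C f m a b)" using b by (simp add: CM_car fam_def)
  then show ?thesis by blast
qed

lemma ID_car_def: "car (ID C f m) = {y. (\<forall>a. y a \<in> car (dirlim (\<lambda>b. CM C f m a b) (\<lambda>_ _ x. x))) \<and>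
   (\<forall>a1 a2. a1 \<le> a2 \<longrightarrow> dl_map (\<lambda>b. CM C f m a2 b) incl (\<lambda>b. projp f a2 a1) (y a1) = y a2)}"
  by (simp add: ID_def invlim_def incl_eq)

lemma T_ClD:
  assumes x: "x \<in> car (CM C f m a1 b)"
  shows "dl_map (\<lambda>b. CM C f m a2 b) incl (\<lambda>b. projp f a2 a1) (ClD (\<lambda>b. CM C f m a1 b) x)
       = ClD (\<lambda>b. CM C f m a2 b) (projp f a2 a1 x)"
proof -
  define p where "p = dl_rep (ClD (\<lambda>b. CM C f m a1 b) x)"
  have 1: "snd p = x" "x \<in> car (CM C f m a1 (fst p))"
    using ClD_rep[where V="\<lambda>b. CM C f m a1 b" and b=b, OF x] p_def by auto
  have 2: "projp f a2 a1 x \<in> car (CM C f m a2 (fst p))"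
    using 1(2) by (simp add: CM_car projp_def)
  show ?thesis unfolding dl_map_def p_def[symmetric] 1(1) incl_eq
    by (rule dl_cls_id[where V="\<lambda>b. CM C f m a2 b", OF 2])
qed

lemma ID_car:
  assumes fl: "floer_triple C f m"
  shows "car (ID C f m) = YD C f m ` car (Nov C f m)"
proof
  show "YD C f m ` car (Nov C f m) \<subseteq> car (ID C f m)"
  proof
    fix y assume "y \<in> YD C f m ` car (Nov C f m)"
    then obtain \<gamma> where g: "\<gamma> \<in> car (Nov C f m)" "y = YD C f m \<gamma>" by blast
    have 1: "y a \<in> car (dirlim (\<lambda>b. CM C f m a b) (\<lambda>_ _ x. x))" for a
    proof -
      obtain b where "fam f \<gamma> a \<in> car (CM C f m a b)" using Nov_CM[OF g(1)] by blast
      then show ?thesis unfolding dirlim_car g(2) YD_def by blast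
    qed
    have 2: "dl_map (\<lambda>b. CM C f m a2 b) incl (\<lambda>b. projp f a2 a1) (y a1) = y a2" if a: "a1 \<le> a2" for a1 a2
    proof -
      obtain b where b: "fam f \<gamma> a1 \<in> car (CM C f m a1 b)" using Nov_CM[OF g(1)] by blast
      show ?thesis unfolding g(2) YD_def T_ClD[OF b] projp_fam[OF a] ..
    qed
    show "y \<in> car (ID C f m)" unfolding ID_car_def using 1 2 by blast
  qed
next
  show "car (ID C f m) \<subseteq> YD C f m ` car (Nov C f m)"
  proof
    fix y assume y: "y \<in> car (ID C f m)"
    define x where "x = (\<lambda>a. snd (dl_rep (y a)))"
    define bb where "bb = (\<lambda>a. fst (dl_rep (y a)))"
    have ya: "y a = ClD (\<lambda>b. CM C f m a b) (x a) \<and> x a \<in> car (CM C f m a (bb a))" for a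
    proof -
      have "y a \<in> car (dirlim (\<lambda>b. CM C f m a b) (\<lambda>_ _ x. x))" using y unfolding ID_car_def by blast
      then obtain b x' where bx: "y a = ClD (\<lambda>b. CM C f m a b) x'" "x' \<in> car (CM C f m a b)"
        unfolding dirlim_car by blast
      have "x a = x' \<and> x' \<in> car (CM C f m a (bb a))"
        using ClD_rep[where V="\<lambda>b. CM C f m a b" and b=b, OF bx(2)] unfolding x_def bb_def bx(1) by simp
      then show ?thesis using bx(1) by simp
    qed
    have comp: "projp f a2 a1 (x a1) = x a2" if a: "a1 \<le> a2" for a1 a2
    proof -
      have "dl_map (\<lambda>b. CM C f m a2 b) incl (\<lambda>b. projp f a2 a1) (y a1) = y a2"
        using y a unfolding ID_car_def by blast
      then have "ClD (\<lambda>b. CM C f m a2 b) (projp f a2 a1 (x a1)) = ClD (\<lambda>b. CM C f m a2 b) (x a2)"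
        using ya[of a1] ya[of a2] T_ClD[of "x a1" C f m a1 "bb a1" a2] by simp
      moreover have "projp f a2 a1 (x a1) \<in> car (CM C f m a2 (bb a1))"
        using ya[of a1] by (simp add: CM_car projp_def)
      ultimately show ?thesis using ClD_inj by metis
    qed
    define \<gamma> where "\<gamma> = (\<lambda>c. x (f c) c)"
    have xf: "x a = fam f \<gamma> a" for a
    proof (rule ext)
      fix c show "x a c = fam f \<gamma> a c"
      proof (cases "a \<le> f c")
        case True
        have "projp f (f c) a (x a) c = x (f c) c" using comp[OF True] by simp
        then show ?thesis using True by (simp add: projp_def fam_def \<gamma>_def)
      next
        case False
        have "x a \<in> car (CM C f m a (bb a))" using ya by blast
        then have "x a c = 0" using False unfolding CM_car by force
        then show ?thesis using False by (simp add: fam_def)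
      qed
    qed
    have s1: "\<forall>c. \<gamma> c \<noteq> 0 \<longrightarrow> c \<in> C"
    proof (intro allI impI)
      fix c assume "\<gamma> c \<noteq> 0"
      then have "x (f c) c \<noteq> 0" by (simp add: \<gamma>_def)
      moreover have "x (f c) \<in> car (CM C f m (f c) (bb (f c)))" using ya by blast
      ultimately show "c \<in> C" unfolding CM_car by blast
    qed
    have s2: "finite {c. \<gamma> c \<noteq> 0 \<and> b < f c}" for b
    proof -
      have "{c. \<gamma> c \<noteq> 0 \<and> b < f c} \<subseteq> Cab C f b (bb b)"
      proof
        fix c assume c: "c \<in> {c. \<gamma> c \<noteq> 0 \<and> b < f c}"
        then have "x b c \<noteq> 0" using xf[of b] by (simp add: fam_def)
        moreover have "x b \<in> car (CM C f m b (bb b))" using ya by blast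
        ultimately show "c \<in> Cab C f b (bb b)" unfolding CM_car Cab_def by blast
      qed
      then show ?thesis using Cab_fin[OF fl] by (rule finite_subset)
    qed
    have "\<gamma> \<in> car (Nov C f m)" using s1 s2 by (simp add: Nov_car)
    moreover have "y = YD C f m \<gamma>"
    proof (rule ext)
      fix a show "y a = YD C f m \<gamma> a" using ya[of a] xf[of a] by (simp add: YD_def)
    qed
    ultimately show "y \<in> YD C f m ` car (Nov C f m)" by blast
  qed
qed

lemma nov_ID_YD: "\<gamma> \<in> car (Nov C f m) \<Longrightarrow> nov_ID f (YD C f m \<gamma>) = \<gamma>"
proof (rule ext)
  fix c assume g: "\<gamma> \<in> car (Nov C f m)"
  obtain b where b: "fam f \<gamma> (f c) \<in> car (CM C f m (f c) b)" using Nov_CM[OF g] by blast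
  show "nov_ID f (YD C f m \<gamma>) c = \<gamma> c"
    using ClD_rep[where V="\<lambda>b. CM C f m (f c) b" and b=b, OF b]
    by (simp add: nov_ID_def YD_def fam_def)
qed

lemma ID_ops:
  "ad (ID C f m) y z = (\<lambda>a. ad (dirlim (\<lambda>b. CM C f m a b) (\<lambda>_ _ x. x)) (y a) (z a))"
  "sm (ID C f m) s y = (\<lambda>a. sm (dirlim (\<lambda>b. CM C f m a b) (\<lambda>_ _ x. x)) s (y a))"
  "dd (ID C f m) y = (\<lambda>a. dd (dirlim (\<lambda>b. CM C f m a b) (\<lambda>_ _ x. x)) (y a))"
  "zr (ID C f m) = (\<lambda>a. zr (dirlim (\<lambda>b. CM C f m a b) (\<lambda>_ _ x. x)))"
  by (simp_all add: ID_def invlim_def incl_eq)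

lemma ID_ad:
  assumes g: "\<gamma> \<in> car (Nov C f m)" and d: "\<delta> \<in> car (Nov C f m)"
  shows "ad (ID C f m) (YD C f m \<gamma>) (YD C f m \<delta>) = YD C f m (ad (Nov C f m) \<gamma> \<delta>)"
proof (rule ext)
  fix a
  obtain b1 where b1: "fam f \<gamma> a \<in> car (CM C f m a b1)" using Nov_CM[OF g] by blast
  obtain b2 where b2: "fam f \<delta> a \<in> car (CM C f m a b2)" using Nov_CM[OF d] by blast
  have e: "ad (Nov C f m) \<gamma> \<delta> = (\<lambda>c. \<gamma> c + \<delta> c)" by (simp add: Nov_def)
  show "ad (ID C f m) (YD C f m \<gamma>) (YD C f m \<delta>) a = YD C f m (ad (Nov C f m) \<gamma> \<delta>) a"
    unfolding ID_ops YD_def e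
  proof (rule dirlim_ad[OF b1 b2])
    show "\<And>b b' z. b \<le> b' \<Longrightarrow> z \<in> car (CM C f m a b) \<Longrightarrow> z \<in> car (CM C f m a b')" by (rule CM_mono)
    fix b assume x: "fam f \<gamma> a \<in> car (CM C f m a b)" and y: "fam f \<delta> a \<in> car (CM C f m a b)"
    have eq: "ad (CM C f m a b) (fam f \<gamma> a) (fam f \<delta> a) = fam f (\<lambda>c. \<gamma> c + \<delta> c) a"
      by (simp add: CM_def fam_def fun_eq_iff)
    have "fam f (\<lambda>c. \<gamma> c + \<delta> c) a \<in> car (CM C f m a b)"
    proof -
      have "\<forall>c. fam f (\<lambda>c. \<gamma> c + \<delta> c) a c \<noteq> 0 \<longrightarrow> fam f \<gamma> a c \<noteq> 0 \<or> fam f \<delta> a c \<noteq> 0"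
        by (auto simp: fam_def)
      then show ?thesis using x y unfolding CM_car by blast
    qed
    then show "ad (CM C f m a b) (fam f \<gamma> a) (fam f \<delta> a) = fam f (\<lambda>c. \<gamma> c + \<delta> c) a \<and> fam f (\<lambda>c. \<gamma> c + \<delta> c) a \<in> car (CM C f m a b)"
      using eq by simp
  qed
qed

lemma ID_sm:
  assumes g: "\<gamma> \<in> car (Nov C f m)"
  shows "sm (ID C f m) s (YD C f m \<gamma>) = YD C f m (sm (Nov C f m) s \<gamma>)"
proof (rule ext)
  fix a
  obtain b1 where b1: "fam f \<gamma> a \<in> car (CM C f m a b1)" using Nov_CM[OF g] by blast
  have e: "sm (Nov C f m) s \<gamma> = (\<lambda>c. s * \<gamma> c)" by (simp add: Nov_def)
  show "sm (ID C f m) s (YD C f m \<gamma>) a = YD C f m (sm (Nov C f m) s \<gamma>) a"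
    unfolding ID_ops YD_def e
  proof (rule dirlim_sm[where V="\<lambda>b. CM C f m a b", OF b1])
    fix b assume x: "fam f \<gamma> a \<in> car (CM C f m a b)"
    have eq: "sm (CM C f m a b) s (fam f \<gamma> a) = fam f (\<lambda>c. s * \<gamma> c) a"
      by (simp add: CM_def fam_def fun_eq_iff)
    have "fam f (\<lambda>c. s * \<gamma> c) a \<in> car (CM C f m a b)"
    proof -
      have "\<forall>c. fam f (\<lambda>c. s * \<gamma> c) a c \<noteq> 0 \<longrightarrow> fam f \<gamma> a c \<noteq> 0"
        by (simp add: fam_def)
      then show ?thesis using x unfolding CM_car by blast
    qed
    then show "sm (CM C f m a b) s (fam f \<gamma> a) = fam f (\<lambda>c. s * \<gamma> c) a \<and> fam f (\<lambda>c. s * \<gamma> c) a \<in> car (CM C f m a b)"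
      using eq by simp
  qed
qed

lemma ID_dd:
  assumes fl: "floer_triple C f m" and g: "\<gamma> \<in> car (Nov C f m)"
  shows "dd (ID C f m) (YD C f m \<gamma>) = YD C f m (dd (Nov C f m) \<gamma>)"
proof (rule ext)
  fix a
  obtain b1 where b1: "fam f \<gamma> a \<in> car (CM C f m a b1)" using Nov_CM[OF g] by blast
  have sC: "\<forall>c. \<gamma> c \<noteq> 0 \<longrightarrow> c \<in> C" using g by (simp add: Nov_car)
  show "dd (ID C f m) (YD C f m \<gamma>) a = YD C f m (dd (Nov C f m) \<gamma>) a"
    unfolding ID_ops YD_def
  proof (rule dirlim_dd[where V="\<lambda>b. CM C f m a b", OF b1])
    fix b assume x: "fam f \<gamma> a \<in> car (CM C f m a b)"
    have bd: "\<forall>c. \<gamma> c \<noteq> 0 \<longrightarrow> a \<le> f c \<longrightarrow> f c \<le> b"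
    proof (intro allI impI)
      fix c assume "\<gamma> c \<noteq> 0" "a \<le> f c"
      then have "fam f \<gamma> a c \<noteq> 0" by (simp add: fam_def)
      then show "f c \<le> b" using x unfolding CM_car by blast
    qed
    have eq: "dd (CM C f m a b) (fam f \<gamma> a) = fam f (dd (Nov C f m) \<gamma>) a" by (rule DD[OF fl sC bd])
    show "dd (CM C f m a b) (fam f \<gamma> a) = fam f (dd (Nov C f m) \<gamma>) a \<and> fam f (dd (Nov C f m) \<gamma>) a \<in> car (CM C f m a b)"
      using eq CM_dd_car[of C f m a b "fam f \<gamma> a"] by simp
  qed
qed

lemma ID_zr: "zr (ID C f m) = YD C f m (zr (Nov C f m))"
proof (rule ext)
  fix a
  have z: "zr (CM C f m a 0) = (\<lambda>c. 0)" by (simp add: CM_def)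
  have "zr (CM C f m a 0) \<in> car (CM C f m a 0)" by (simp add: CM_def)
  then have "zr (dirlim (\<lambda>b. CM C f m a b) (\<lambda>_ _ x. x)) = ClD (\<lambda>b. CM C f m a b) (zr (CM C f m a 0))"
    by (rule dirlim_zr[where V="\<lambda>b. CM C f m a b"])
  then show "zr (ID C f m) a = YD C f m (zr (Nov C f m)) a"
    unfolding ID_ops YD_def using z by (simp add: Nov_def fam_zero)
qed

lemma kmap_XD:
  assumes g: "\<gamma> \<in> car (Nov C f m)"
  shows "kmap C f m (XD C f m \<gamma>) = YD C f m \<gamma>"
proof (rule ext)
  fix a
  have r: "snd (dl_rep (XD C f m \<gamma>)) = fam f \<gamma>" "fam f \<gamma> \<in> car (IB C f m (fst (dl_rep (XD C f m \<gamma>))))"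
    using XD_rep[OF g] by auto
  have "fam f \<gamma> a \<in> car (CM C f m a (fst (dl_rep (XD C f m \<gamma>))))" using r(2) by (simp add: IB_car)
  then show "kmap C f m (XD C f m \<gamma>) a = YD C f m \<gamma> a"
    unfolding kmap_def YD_def r(1) incl_eq by (rule dl_cls_id)
qed

theorem mainTheorem7:
  fixes C :: "'c set" and f :: "'c \<Rightarrow> real" and m :: "'c \<Rightarrow> 'c \<Rightarrow> 'k::field"
  assumes "floer_triple C f m"
  shows "chain_iso (DI C f m) (Nov C f m) (nov_DI f)
       \<and> chain_iso (ID C f m) (Nov C f m) (nov_ID f)
       \<and> chain_iso (DI C f m) (ID C f m) (kmap C f m)
       \<and> lin_iso (hom (DI C f m)) (hom (ID C f m)) (hmap (DI C f m) (ID C f m) (kmap C f m))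
       \<and> (\<exists>\<psi>. lin_iso (hom (DI C f m)) (hom (Nov C f m)) \<psi>)
       \<and> (\<exists>\<psi>. lin_iso (hom (ID C f m)) (hom (Nov C f m)) \<psi>)"
proof -
  let ?N = "Nov C f m"
  have N: "gcx ?N" by (rule Nov_gcx[OF assms])
  have DIc: "car (DI C f m) = XD C f m ` car ?N" by (rule DI_car[OF assms])
  have IDc: "car (ID C f m) = YD C f m ` car ?N" by (rule ID_car[OF assms])
  have c2: "car ?N = id ` car ?N" by simp
  have a2: "\<And>x y. x\<in>car ?N \<Longrightarrow> y\<in>car ?N \<Longrightarrow> ad ?N (id x) (id y) = id (ad ?N x y)" by simp
  have s2: "\<And>s x. x\<in>car ?N \<Longrightarrow> sm ?N s (id x) = id (sm ?N s x)" by simp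
  have d2: "\<And>x. x\<in>car ?N \<Longrightarrow> dd ?N (id x) = id (dd ?N x)" by simp
  have aD: "\<And>x y. x\<in>car ?N \<Longrightarrow> y\<in>car ?N \<Longrightarrow> ad (DI C f m) (XD C f m x) (XD C f m y) = XD C f m (ad ?N x y)"
    by (rule DI_ad)
  have sD: "\<And>s x. x\<in>car ?N \<Longrightarrow> sm (DI C f m) s (XD C f m x) = XD C f m (sm ?N s x)"
    by (rule DI_sm)
  have dD: "\<And>x. x\<in>car ?N \<Longrightarrow> dd (DI C f m) (XD C f m x) = XD C f m (dd ?N x)"
    by (rule DI_dd[OF assms])
  have aI: "\<And>x y. x\<in>car ?N \<Longrightarrow> y\<in>car ?N \<Longrightarrow> ad (ID C f m) (YD C f m x) (YD C f m y) = YD C f m (ad ?N x y)"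
    by (rule ID_ad)
  have sI: "\<And>s x. x\<in>car ?N \<Longrightarrow> sm (ID C f m) s (YD C f m x) = YD C f m (sm ?N s x)"
    by (rule ID_sm)
  have dI: "\<And>x. x\<in>car ?N \<Longrightarrow> dd (ID C f m) (YD C f m x) = YD C f m (dd ?N x)"
    by (rule ID_dd[OF assms])
  have kD: "\<And>x. x\<in>car ?N \<Longrightarrow> nov_DI f (XD C f m x) = id x" by (simp add: nov_DI_XD)
  have kI: "\<And>x. x\<in>car ?N \<Longrightarrow> nov_ID f (YD C f m x) = id x" by (simp add: nov_ID_YD)
  have kK: "\<And>x. x\<in>car ?N \<Longrightarrow> kmap C f m (XD C f m x) = YD C f m x" by (rule kmap_XD)
  have injY: "inj_on (YD C f m) (car ?N)"
    by (rule inj_on_inverseI[where g="nov_ID f"]) (rule nov_ID_YD)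
  have i1: "chain_iso (DI C f m) ?N (nov_DI f)"
    apply (rule rep_iso[OF N DIc c2 inj_on_id])
    apply (fact aD) apply (fact sD) apply (fact dD) apply (fact a2) apply (fact s2) apply (fact d2) apply (fact kD)
    done
  have i2: "chain_iso (ID C f m) ?N (nov_ID f)"
    apply (rule rep_iso[OF N IDc c2 inj_on_id])
    apply (fact aI) apply (fact sI) apply (fact dI) apply (fact a2) apply (fact s2) apply (fact d2) apply (fact kI)
    done
  have i3: "chain_iso (DI C f m) (ID C f m) (kmap C f m)"
    apply (rule rep_iso[OF N DIc IDc injY])
    apply (fact aD) apply (fact sD) apply (fact dD) apply (fact aI) apply (fact sI) apply (fact dI) apply (fact kK)
    done
  have gD: "gcx (DI C f m)"
    apply (rule rep_gcx[OF N DIc])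
    apply (fact aD) apply (fact sD) apply (fact dD) apply (rule DI_zr)
    done
  have gI: "gcx (ID C f m)"
    apply (rule rep_gcx[OF N IDc])
    apply (fact aI) apply (fact sI) apply (fact dI) apply (rule ID_zr)
    done
  have h3: "lin_iso (hom (DI C f m)) (hom (ID C f m)) (hmap (DI C f m) (ID C f m) (kmap C f m))"
    by (rule hom_iso[OF gD gI i3])
  have h1: "lin_iso (hom (DI C f m)) (hom ?N) (hmap (DI C f m) ?N (nov_DI f))"
    by (rule hom_iso[OF gD N i1])
  have h2: "lin_iso (hom (ID C f m)) (hom ?N) (hmap (ID C f m) ?N (nov_ID f))"
    by (rule hom_iso[OF gI N i2])
  have e1: "\<exists>\<psi>. lin_iso (hom (DI C f m)) (hom ?N) \<psi>"
    by (rule exI[where x="hmap (DI C f m) ?N (nov_DI f)"]) (rule h1)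
  have e2: "\<exists>\<psi>. lin_iso (hom (ID C f m)) (hom ?N) \<psi>"
    by (rule exI[where x="hmap (ID C f m) ?N (nov_ID f)"]) (rule h2)
  show ?thesis by (rule conjI[OF i1 conjI[OF i2 conjI[OF i3 conjI[OF h3 conjI[OF e1 e2]]]]])
qed

end
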